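(* For $p\in(0,1)$ let $X_p^{(1)},X_p^{(2)}$ be independent geometric random variables, each with $P\{X=k\}=p(1-p)^k$, $k=0,1,2,\dots$, and let $X_p^S=X_p^{(1)}-X_p^{(2)}$. Then $$\inf_{p\in(0,1)}P\left\{|X^S_p-E[X^S_p]|\le\sqrt{\mathrm{Var}(X^S_p)}\right\}=\inf_{p\in(0,1)}P\left\{|X^S_p-E[X^S_p]|<\sqrt{\mathrm{Var}(X^S_p)}\right\}=\frac{\sqrt3}{3}.$$ *)

theory Defs
  imports "HOL-Probability.Probability"
begin

definition sym_geom_pmf :: "real \<Rightarrow> int pmf" where
  "sym_geom_pmf p = map_pmf (\<lambda>(a, b). int a - int b) (pair_pmf (geometric_pmf p) (geometric_pmf p))"

end

theory Submission
  imports Defs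
begin

lemma bernoulli2:
  fixes t :: real assumes "t \<ge> 0"
  shows "(1 + t) ^ n \<ge> 1 + real n * t + real n * (real n - 1) / 2 * t\<^sup>2"
proof (induction n)
  case 0 then show ?case by simp
next
  case (Suc n)
  have "(1 + t) ^ Suc n = (1 + t) * (1 + t) ^ n" by simp
  also have "\<dots> \<ge> (1 + t) * (1 + real n * t + real n * (real n - 1) / 2 * t\<^sup>2)"
    using Suc assms by (intro mult_left_mono) auto
  finally have "(1 + t) ^ Suc n \<ge> (1 + t) * (1 + real n * t + real n * (real n - 1) / 2 * t\<^sup>2)" .
  moreover have "(1 + t) * (1 + real n * t + real n * (real n - 1) / 2 * t\<^sup>2) \<ge>
      1 + real (Suc n) * t + real (Suc n) * (real (Suc n) - 1) / 2 * t\<^sup>2"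
  proof -
    have "(1 + t) * (1 + real n * t + real n * (real n - 1) / 2 * t\<^sup>2) - 
      (1 + real (Suc n) * t + real (Suc n) * (real (Suc n) - 1) / 2 * t\<^sup>2) = real n * (real n - 1) / 2 * t^3"
      by (simp add: field_simps power2_eq_square power3_eq_cube)
    moreover have "real n * (real n - 1) / 2 * t^3 \<ge> 0"
      using assms by (cases n) auto
    ultimately show ?thesis by linarith
  qed
  ultimately show ?case by (rule order_trans[rotated])
qed

lemma sqrt3_facts: "sqrt 3 * sqrt 3 = (3::real)" "sqrt 3 > (1.7::real)" "sqrt 3 < (1.8::real)"
proof -
  show "sqrt 3 * sqrt 3 = (3::real)" by simp
  show "sqrt 3 > (1.7::real)" by (rule real_less_rsqrt) (simp add: power2_eq_square)
  show "sqrt 3 < (1.8::real)" by (rule real_less_lsqrt) (simp_all add: power2_eq_square)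
qed

lemma LB_case1:
  fixes q :: real
  assumes q: "0 < q" "q < 1" and h: "2 * q \<le> (1 - q)\<^sup>2"
  shows "2 * q / (1 + q) \<le> 1 - 1 / sqrt 3"
proof -
  define r where "r = sqrt 3"
  have r: "r * r = 3" "r > 1.7" "r < 1.8" using sqrt3_facts unfolding r_def by auto
  have "(2 - q)\<^sup>2 \<ge> r * r" using h r by (simp add: power2_eq_square algebra_simps)
  then have "r\<^sup>2 \<le> (2 - q)\<^sup>2" by (simp only: power2_eq_square[of r])
  from power2_le_imp_le[OF this] have "2 - q \<ge> r" using q by linarith
  then have "q * (r + 1) \<le> (2 - r) * (r + 1)"
    using r q by (intro mult_right_mono) auto
  also have "(2 - r) * (r + 1) = r + 2 - r * r" by (simp add: algebra_simps)
  finally have "q * (r + 1) \<le> r - 1" using r by simp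
  then have "2 * q * r \<le> (r - 1) * (1 + q)" by (simp add: algebra_simps)
  then show ?thesis using q r unfolding r_def[symmetric]
    by (simp add: field_simps)
qed

lemma LB_case2:
  fixes q :: real
  assumes q: "0 < q" "q < 1" and n: "n \<ge> 2" and h: "2 * q \<le> (real n)\<^sup>2 * (1 - q)\<^sup>2"
  shows "2 * q ^ n / (1 + q) \<le> 1 - 1 / sqrt 3"
proof -
  define t where "t = (1 - q) / q"
  have t: "t > 0" using q by (simp add: t_def)
  have qt: "q * (1 + t) = 1" using q by (simp add: t_def field_simps)
  define u where "u = real n * t"
  have u0: "u \<ge> 0" using t by (simp add: u_def)
  have "u\<^sup>2 * q\<^sup>2 = (real n)\<^sup>2 * (1 - q)\<^sup>2" using q by (simp add: u_def t_def power_divide power_mult_distrib)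
  then have "(u\<^sup>2 * q) * q \<ge> 2 * q" using h by (simp add: power2_eq_square mult_ac)
  then have u2: "u\<^sup>2 * q \<ge> 2" using q by simp
  moreover have "u\<^sup>2 * q \<le> u\<^sup>2" using q by (intro mult_left_le) auto
  ultimately have "u\<^sup>2 \<ge> 2" by linarith
  then have "1.4\<^sup>2 \<le> u\<^sup>2" by (simp add: power2_eq_square[of "7/5::real"])
  from power2_le_imp_le[OF this u0] have u14: "u \<ge> 1.4" .
  have b: "(1 + t) ^ n \<ge> 1 + u + u\<^sup>2 / 4"
  proof -
    have "real n * (real n - 1) / 2 * t\<^sup>2 \<ge> u\<^sup>2 / 4"
    proof -
      have "real n * (real n - 1) / 2 * t\<^sup>2 - u\<^sup>2 / 4 = real n * (real n - 2) / 4 * t\<^sup>2"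
        by (simp add: u_def field_simps power2_eq_square)
      moreover have "real n * (real n - 2) / 4 * t\<^sup>2 \<ge> 0" using n by simp
      ultimately show ?thesis by linarith
    qed
    then show ?thesis using bernoulli2[of t n] t unfolding u_def by linarith
  qed
  have "(1 + q) * (1 + u + u\<^sup>2 / 4) \<ge> 5"
  proof -
    have "(1 + q) * (1 + u + u\<^sup>2 / 4) = 1 + u + q + q * u + u\<^sup>2 * q / 4 + u\<^sup>2 / 4"
      by (simp add: algebra_simps)
    moreover have "q * u \<ge> 1.4 * q" using u14 q by simp
    moreover have "u\<^sup>2 / 4 \<ge> 1 / (2 * q)" using u2 q by (simp add: field_simps)
    moreover have "2.4 * q + 1 / (2 * q) \<ge> 2.1"
    proof -
      have "2.4 * q * q + 1/2 - 2.1 * q = 2.4 * (q - 7/16)\<^sup>2 + 13/320"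
        by (simp add: power2_eq_square algebra_simps)
      moreover have "2.4 * (q - 7/16)\<^sup>2 \<ge> 0" by simp
      ultimately have "2.4 * q * q + 1/2 - 2.1 * q \<ge> 0" by linarith
      then show ?thesis using q by (simp add: field_simps)
    qed
    ultimately show ?thesis using u14 u2 by linarith
  qed
  moreover have "(1 + q) * (1 + t) ^ n \<ge> (1 + q) * (1 + u + u\<^sup>2 / 4)" using b q by (intro mult_left_mono) auto
  ultimately have "(1 + q) * (1 + t) ^ n \<ge> 5" by linarith
  then have "(1 + q) * (1 + t) ^ n * q ^ n \<ge> 5 * q ^ n" using q by (simp add: mult_right_mono)
  moreover have "(1 + t) ^ n * q ^ n = 1" using qt by (metis power_mult_distrib power_one mult.commute)
  ultimately have "1 + q \<ge> 5 * q ^ n" by (simp add: mult.assoc)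
  then have "2 * q ^ n / (1 + q) \<le> 2 / 5" using q by (simp add: field_simps)
  moreover have "2 / 5 \<le> 1 - 1 / sqrt 3"
    using sqrt3_facts by (simp add: field_simps)
  ultimately show ?thesis by linarith
qed

lemma LB:
  fixes q :: real
  assumes q: "0 < q" "q < 1" and n: "n \<ge> 1" and h: "2 * q \<le> (real n)\<^sup>2 * (1 - q)\<^sup>2"
  shows "2 * q ^ n / (1 + q) \<le> 1 - 1 / sqrt 3"
proof (cases "n = 1")
  case True then show ?thesis using LB_case1[OF q] h by simp
next
  case False then show ?thesis using LB_case2[OF q _ h] n by simp
qed

lemma sym_geom_bind:
  "sym_geom_pmf p = bind_pmf (geometric_pmf p) (\<lambda>b. map_pmf (\<lambda>a. int a - int b) (geometric_pmf p))"
proof -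
  have "sym_geom_pmf p = map_pmf (\<lambda>(a, b). int a - int b) (map_pmf (\<lambda>(x, y). (y, x)) (pair_pmf (geometric_pmf p) (geometric_pmf p)))"
    unfolding sym_geom_pmf_def by (subst pair_commute_pmf) simp
  also have "\<dots> = map_pmf (\<lambda>(b, a). int a - int b) (pair_pmf (geometric_pmf p) (geometric_pmf p))"
    by (simp add: pmf.map_comp o_def case_prod_unfold)
  also have "\<dots> = bind_pmf (geometric_pmf p) (\<lambda>b. map_pmf (\<lambda>a. int a - int b) (geometric_pmf p))"
    by (simp add: pair_pmf_def map_bind_pmf map_pmf_def[symmetric] bind_return_pmf pmf.map_comp o_def)
  finally show ?thesis .
qed

lemma sym_geom_uminus: "map_pmf uminus (sym_geom_pmf p) = sym_geom_pmf p"
proof -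
  have "sym_geom_pmf p = map_pmf (\<lambda>(a, b). int a - int b) (map_pmf (\<lambda>(x, y). (y, x)) (pair_pmf (geometric_pmf p) (geometric_pmf p)))"
    unfolding sym_geom_pmf_def by (subst pair_commute_pmf) simp
  also have "\<dots> = map_pmf uminus (sym_geom_pmf p)"
    unfolding sym_geom_pmf_def by (simp add: pmf.map_comp o_def case_prod_beta)
  finally show ?thesis by simp
qed

lemma pmf_sym_nat:
  assumes p: "0 < p" "p < 1"
  shows "pmf (sym_geom_pmf p) (int n) = p * (1 - p) ^ n / (2 - p)"
proof -
  let ?q = "1 - p"
  have inj: "inj (\<lambda>a. int a - int b)" for b by (auto simp: inj_def)
  have "ennreal (pmf (sym_geom_pmf p) (int n)) =
      (\<integral>\<^sup>+ b. ennreal (pmf (map_pmf (\<lambda>a. int a - int b) (geometric_pmf p)) (int n)) \<partial>measure_pmf (geometric_pmf p))"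
    unfolding sym_geom_bind by (rule ennreal_pmf_bind)
  also have "\<dots> = (\<integral>\<^sup>+ b. ennreal ((1 - p) ^ (n + b) * p) \<partial>measure_pmf (geometric_pmf p))"
  proof (rule nn_integral_cong)
    fix b
    have "pmf (map_pmf (\<lambda>a. int a - int b) (geometric_pmf p)) (int n) = 
       pmf (map_pmf (\<lambda>a. int a - int b) (geometric_pmf p)) ((\<lambda>a. int a - int b) (n + b))" by simp
    also have "\<dots> = pmf (geometric_pmf p) (n + b)"
      by (rule pmf_map_inj'[OF inj])
    finally have "pmf (map_pmf (\<lambda>a. int a - int b) (geometric_pmf p)) (int n) = pmf (geometric_pmf p) (n + b)" .
    then show "ennreal (pmf (map_pmf (\<lambda>a. int a - int b) (geometric_pmf p)) (int n)) = ennreal ((1 - p) ^ (n + b) * p)"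
      using p by simp
  qed
  also have "\<dots> = (\<Sum>b. ennreal (pmf (geometric_pmf p) b) * ennreal ((1 - p) ^ (n + b) * p))"
    by (simp add: nn_integral_measure_pmf nn_integral_count_space_nat)
  also have "\<dots> = (\<Sum>b. ennreal ((p\<^sup>2 * ?q ^ n) * (?q\<^sup>2) ^ b))"
  proof (intro suminf_cong)
    fix b
    have e: "(1 - p) ^ b * p * ((1 - p) ^ (n + b) * p) = (p\<^sup>2 * ?q ^ n) * (?q\<^sup>2) ^ b"
      by (simp add: power_add power2_eq_square power_mult_distrib mult_ac)
    show "ennreal (pmf (geometric_pmf p) b) * ennreal ((1 - p) ^ (n + b) * p) = ennreal ((p\<^sup>2 * ?q ^ n) * (?q\<^sup>2) ^ b)"
      using p by (simp add: ennreal_mult[symmetric] e)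
  qed
  also have "\<dots> = ennreal ((p\<^sup>2 * ?q ^ n) * (1 / (1 - ?q\<^sup>2)))"
    using p by (intro suminf_ennreal_eq sums_mult geometric_sums) (auto simp: abs_square_less_1)
  also have "(p\<^sup>2 * ?q ^ n) * (1 / (1 - ?q\<^sup>2)) = p * (1 - p) ^ n / (2 - p)"
    using p by (simp add: field_simps power2_eq_square)
  finally show ?thesis using p by (simp add: ennreal_inj)
qed

lemma pmf_sym:
  assumes p: "0 < p" "p < 1"
  shows "pmf (sym_geom_pmf p) k = p * (1 - p) ^ nat \<bar>k\<bar> / (2 - p)"
proof (cases "k \<ge> 0")
  case True
  then show ?thesis using pmf_sym_nat[OF p, of "nat k"] by simp
next
  case False
  have "pmf (sym_geom_pmf p) k = pmf (map_pmf uminus (sym_geom_pmf p)) (- (int (nat (-k))))"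
    using False by (simp add: sym_geom_uminus)
  also have "\<dots> = pmf (sym_geom_pmf p) (int (nat (-k)))"
    by (rule pmf_map_inj') (auto simp: inj_def)
  finally show ?thesis using pmf_sym_nat[OF p, of "nat (-k)"] False by simp
qed

lemma expectation_sym: "measure_pmf.expectation (sym_geom_pmf p) (f::int\<Rightarrow>real) = 0"
  if "\<And>k. f (-k) = - f k"
proof -
  have "measure_pmf.expectation (sym_geom_pmf p) f = measure_pmf.expectation (map_pmf uminus (sym_geom_pmf p)) f"
    by (simp add: sym_geom_uminus)
  also have "\<dots> = measure_pmf.expectation (sym_geom_pmf p) (\<lambda>x. f (- x))"
    by (rule integral_map_pmf)
  also have "(\<lambda>x. f (- x)) = (\<lambda>x. - f x)" by (intro ext) (rule that)
  also have "measure_pmf.expectation (sym_geom_pmf p) (\<lambda>x. - f x) = - measure_pmf.expectation (sym_geom_pmf p) f"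
    by (rule Bochner_Integration.integral_minus)
  finally show ?thesis by simp
qed

lemma sums_n2:
  fixes z :: real assumes z: "\<bar>z\<bar> < 1"
  shows "(\<lambda>n. real n ^ 2 * z ^ n) sums (z * (1 + z) / (1 - z) ^ 3)"
proof -
  have s1: "(\<lambda>n. real n * w ^ n) sums (w / (1 - w)\<^sup>2)" if "norm w < 1" for w :: real
    using geometric_sums_times_n[of w] that by (simp add: mult.commute)
  have d: "((\<lambda>w. w / (1 - w)\<^sup>2) has_field_derivative ((1 + z) / (1 - z) ^ 3)) (at z)"
  proof -
    have nz: "1 - z \<noteq> 0" using z by auto
    have "((\<lambda>w. w / (1 - w)\<^sup>2) has_field_derivative
        ((1 * (1 - z)\<^sup>2 - z * (2 * (1 - z) * (-1))) / ((1 - z)\<^sup>2 * (1 - z)\<^sup>2))) (at z)"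
      using nz by (auto intro!: derivative_eq_intros simp: power2_eq_square)
    moreover have "(1 * (1 - z)\<^sup>2 - z * (2 * (1 - z) * (-1))) / ((1 - z)\<^sup>2 * (1 - z)\<^sup>2) = (1 + z) / (1 - z) ^ 3"
    proof -
      have e1: "1 * (1 - z)\<^sup>2 - z * (2 * (1 - z) * (-1)) = (1 + z) * (1 - z)"
        by (simp add: power2_eq_square algebra_simps)
      have e2: "(1 - z)\<^sup>2 * (1 - z)\<^sup>2 = (1 - z) ^ 3 * (1 - z)"
        by (simp add: power2_eq_square power3_eq_cube)
      show ?thesis unfolding e1 e2 using nz by (rule mult_divide_mult_cancel_right)
    qed
    ultimately show ?thesis by simp
  qed
  have "(\<lambda>n. diffs (\<lambda>n. real n) n * z ^ n) sums ((1 + z) / (1 - z) ^ 3)"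
    by (rule termdiffs_sums_strong[where K=1, OF s1 d]) (use z in auto)
  then have "(\<lambda>n. real (Suc n) ^ 2 * z ^ n) sums ((1 + z) / (1 - z) ^ 3)"
    by (simp add: diffs_def power2_eq_square)
  then have "(\<lambda>n. z * (real (Suc n) ^ 2 * z ^ n)) sums (z * ((1 + z) / (1 - z) ^ 3))"
    by (rule sums_mult)
  then have "(\<lambda>n. real (Suc n) ^ 2 * z ^ Suc n) sums (z * (1 + z) / (1 - z) ^ 3)"
    by (simp add: mult_ac)
  then show ?thesis by (subst (asm) sums_Suc_iff) simp
qed

lemma expectation_nat_pmf:
  fixes M :: "nat pmf" and f :: "nat \<Rightarrow> real"
  assumes nn: "\<And>n. f n \<ge> 0" and s: "(\<lambda>n. pmf M n * f n) sums S"
  shows "measure_pmf.expectation M f = S"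
proof -
  have "measure_pmf.expectation M f = (\<integral>n. pmf M n * f n \<partial>count_space UNIV)"
    unfolding measure_pmf_eq_density by (subst integral_density) auto
  also have "integrable (count_space UNIV) (\<lambda>n. pmf M n * f n)"
    using s nn unfolding integrable_count_space_nat_iff by (simp add: sums_iff abs_mult)
  hence "(\<integral>n. pmf M n * f n \<partial>count_space UNIV) = S"
    using s by (subst integral_count_space_nat) (simp_all add: sums_iff)
  finally show ?thesis .
qed

lemma variance_sym:
  assumes p: "0 < p" "p < 1"
  shows "measure_pmf.variance (sym_geom_pmf p) real_of_int = 2 * (1 - p) / p\<^sup>2"
proof -
  let ?M = "sym_geom_pmf p" and ?q = "1 - p"
  define Y where "Y = map_pmf (\<lambda>k. nat \<bar>k\<bar>) ?M"
  have E: "measure_pmf.expectation ?M real_of_int = 0"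
    by (rule expectation_sym) simp
  have "measure_pmf.variance ?M real_of_int = measure_pmf.expectation ?M (\<lambda>k. real (nat \<bar>k\<bar>) ^ 2)"
    unfolding E by (intro Bochner_Integration.integral_cong) (auto simp: abs_if power2_eq_square)
  also have "\<dots> = measure_pmf.expectation Y (\<lambda>n. real n ^ 2)"
    unfolding Y_def by simp
  also have "\<dots> = 2 * p / (2 - p) * (?q * (1 + ?q) / (1 - ?q) ^ 3)"
  proof (rule expectation_nat_pmf)
    show "(\<lambda>n. pmf Y n * real n ^ 2) sums (2 * p / (2 - p) * (?q * (1 + ?q) / (1 - ?q) ^ 3))"
    proof -
      have "pmf Y n * real n ^ 2 = 2 * p / (2 - p) * (real n ^ 2 * ?q ^ n)" for n
      proof (cases "n = 0")
        case True then show ?thesis by simp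
      next
        case False
        have pre: "(\<lambda>k. nat \<bar>k\<bar>) -` {n} = {int n, - int n}" using False by auto
        have "pmf Y n = measure ?M {int n, - int n}"
          unfolding Y_def pmf_map pre ..
        also have "\<dots> = pmf ?M (int n) + pmf ?M (- int n)"
          using False by (subst measure_measure_pmf_finite) auto
        also have "\<dots> = 2 * p / (2 - p) * ?q ^ n"
          using p by (simp add: pmf_sym)
        finally show ?thesis by simp
      qed
      moreover have "(\<lambda>n. 2 * p / (2 - p) * (real n ^ 2 * ?q ^ n)) sums (2 * p / (2 - p) * (?q * (1 + ?q) / (1 - ?q) ^ 3))"
        using p by (intro sums_mult sums_n2) auto
      ultimately show ?thesis by simp
    qed
  qed simp
  also have "\<dots> = 2 * (1 - p) / p\<^sup>2"
    using p by (simp add: field_simps power2_eq_square power3_eq_cube)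
  finally show ?thesis .
qed

lemma sum_sym_interval:
  fixes q :: real
  shows "(\<Sum>k\<in>{-int m..int m}. q ^ nat \<bar>k\<bar>) = 1 + 2 * (\<Sum>i\<in>{1..m}. q ^ i)"
proof (induction m)
  case 0 then show ?case by simp
next
  case (Suc m)
  have n1: "nat (int m + 1) = Suc m" "nat (1 + int m) = Suc m" by simp_all
  have "{-int (Suc m)..int (Suc m)} = insert (- int (Suc m)) (insert (int (Suc m)) {-int m..int m})"
    by auto
  then have "(\<Sum>k\<in>{-int (Suc m)..int (Suc m)}. q ^ nat \<bar>k\<bar>) = q ^ Suc m + q ^ Suc m + (\<Sum>k\<in>{-int m..int m}. q ^ nat \<bar>k\<bar>)"
    by (simp add: n1)
  then show ?case using Suc by simp
qed

lemma geom_partial: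
  fixes q :: real
  shows "(1 - q) * (\<Sum>i\<in>{1..m}. q ^ i) = q - q ^ (m + 1)"
proof (cases m)
  case 0 then show ?thesis by simp
next
  case (Suc k) then show ?thesis using sum_gp_multiplied[of 1 m q] by simp
qed

lemma prob_sym_le:
  assumes p: "0 < p" "p < 1"
  shows "measure_pmf.prob (sym_geom_pmf p) {k. \<bar>k\<bar> \<le> int m} = 1 - 2 * (1 - p) ^ (m + 1) / (2 - p)"
proof -
  have set: "{k. \<bar>k\<bar> \<le> int m} = {-int m..int m}" by auto
  have "measure_pmf.prob (sym_geom_pmf p) {k. \<bar>k\<bar> \<le> int m} = (\<Sum>k\<in>{-int m..int m}. p * (1 - p) ^ nat \<bar>k\<bar> / (2 - p))"
    unfolding set by (subst measure_measure_pmf_finite) (simp_all add: pmf_sym[OF p])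
  also have "\<dots> = p / (2 - p) * (\<Sum>k\<in>{-int m..int m}. (1 - p) ^ nat \<bar>k\<bar>)"
    by (simp add: sum_distrib_left)
  also have "\<dots> = p / (2 - p) * (1 + 2 * (\<Sum>i\<in>{1..m}. (1 - p) ^ i))"
    by (simp add: sum_sym_interval)
  also have "\<dots> = (p + 2 * ((1 - (1 - p)) * (\<Sum>i\<in>{1..m}. (1 - p) ^ i))) / (2 - p)"
    using p by (simp add: field_simps)
  also have "\<dots> = 1 - 2 * (1 - p) ^ (m + 1) / (2 - p)"
    using p by (simp only: geom_partial) (simp add: field_simps)
  finally show ?thesis .
qed

lemma inv_sqrt3: "1 / sqrt 3 = sqrt 3 / (3::real)"
  using sqrt3_facts(1) by (simp add: field_simps)

lemma val_le:
  assumes p: "0 < p" "p < 1"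
  shows "measure_pmf.prob (sym_geom_pmf p)
              {k. \<bar>real_of_int k - measure_pmf.expectation (sym_geom_pmf p) real_of_int\<bar>
                  \<le> sqrt (measure_pmf.variance (sym_geom_pmf p) real_of_int)}
       = 1 - 2 * (1 - p) ^ (nat \<lfloor>sqrt (2 * (1 - p) / p\<^sup>2)\<rfloor> + 1) / (2 - p)"
proof -
  define s where "s = sqrt (2 * (1 - p) / p\<^sup>2)"
  have s0: "s \<ge> 0" unfolding s_def using p by simp
  have E: "measure_pmf.expectation (sym_geom_pmf p) real_of_int = 0"
    by (rule expectation_sym) simp
  have seteq: "{k. \<bar>real_of_int k - 0\<bar> \<le> s} = {k. \<bar>k\<bar> \<le> int (nat \<lfloor>s\<rfloor>)}"
  proof -
    have "\<bar>real_of_int k\<bar> \<le> s \<longleftrightarrow> \<bar>k\<bar> \<le> \<lfloor>s\<rfloor>" for k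
      by (simp add: le_floor_iff)
    moreover have "int (nat \<lfloor>s\<rfloor>) = \<lfloor>s\<rfloor>" using s0 by simp
    ultimately show ?thesis by auto
  qed
  have "measure_pmf.prob (sym_geom_pmf p)
              {k. \<bar>real_of_int k - measure_pmf.expectation (sym_geom_pmf p) real_of_int\<bar>
                  \<le> sqrt (measure_pmf.variance (sym_geom_pmf p) real_of_int)}
       = measure_pmf.prob (sym_geom_pmf p) {k. \<bar>k\<bar> \<le> int (nat (\<lfloor>s\<rfloor>))}"
    unfolding variance_sym[OF p] unfolding E s_def[symmetric] seteq ..
  also have "\<dots> = 1 - 2 * (1 - p) ^ (nat (\<lfloor>s\<rfloor>) + 1) / (2 - p)"
    by (rule prob_sym_le[OF p])
  finally show ?thesis unfolding s_def .
qed

lemma val_lt: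
  assumes p: "0 < p" "p < 1"
  shows "measure_pmf.prob (sym_geom_pmf p)
              {k. \<bar>real_of_int k - measure_pmf.expectation (sym_geom_pmf p) real_of_int\<bar>
                  < sqrt (measure_pmf.variance (sym_geom_pmf p) real_of_int)}
       = 1 - 2 * (1 - p) ^ (nat (\<lceil>sqrt (2 * (1 - p) / p\<^sup>2)\<rceil> - 1) + 1) / (2 - p)"
proof -
  define s where "s = sqrt (2 * (1 - p) / p\<^sup>2)"
  have s0: "s > 0" unfolding s_def using p by simp
  have E: "measure_pmf.expectation (sym_geom_pmf p) real_of_int = 0"
    by (rule expectation_sym) simp
  have seteq: "{k. \<bar>real_of_int k - 0\<bar> < s} = {k. \<bar>k\<bar> \<le> int (nat (\<lceil>s\<rceil> - 1))}"
  proof -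
    have "\<bar>real_of_int k\<bar> < s \<longleftrightarrow> \<bar>k\<bar> < \<lceil>s\<rceil>" for k
      by (simp add: less_ceiling_iff)
    moreover have "int (nat (\<lceil>s\<rceil> - 1)) = \<lceil>s\<rceil> - 1" using s0 by simp
    ultimately show ?thesis by auto
  qed
  have "measure_pmf.prob (sym_geom_pmf p)
              {k. \<bar>real_of_int k - measure_pmf.expectation (sym_geom_pmf p) real_of_int\<bar>
                  < sqrt (measure_pmf.variance (sym_geom_pmf p) real_of_int)}
       = measure_pmf.prob (sym_geom_pmf p) {k. \<bar>k\<bar> \<le> int (nat (\<lceil>s\<rceil> - 1))}"
    unfolding variance_sym[OF p] unfolding E s_def[symmetric] seteq ..
  also have "\<dots> = 1 - 2 * (1 - p) ^ (nat (\<lceil>s\<rceil> - 1) + 1) / (2 - p)"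
    by (rule prob_sym_le[OF p])
  finally show ?thesis unfolding s_def .
qed

lemma lowb:
  assumes p: "0 < p" "p < 1" and sm: "sqrt (2 * (1 - p) / p\<^sup>2) \<le> real (m + 1)"
  shows "sqrt 3 / 3 \<le> 1 - 2 * (1 - p) ^ (m + 1) / (2 - p)"
proof -
  define q where "q = 1 - p"
  have q: "0 < q" "q < 1" using p by (auto simp: q_def)
  have nn: "0 \<le> 2 * (1 - p) / p\<^sup>2" using p by simp
  have "(sqrt (2 * (1 - p) / p\<^sup>2))\<^sup>2 \<le> (real (m + 1))\<^sup>2"
    by (rule power_mono[OF sm]) (use nn in simp)
  then have "2 * (1 - p) / p\<^sup>2 \<le> (real (m + 1))\<^sup>2"
    using nn by (simp only: real_sqrt_pow2)
  then have "2 * (1 - p) \<le> (real (m + 1))\<^sup>2 * p\<^sup>2"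
    using p by (simp add: pos_divide_le_eq)
  then have "2 * q \<le> (real (m + 1))\<^sup>2 * (1 - q)\<^sup>2"
    by (simp add: q_def)
  from LB[OF q _ this] have "2 * q ^ (m + 1) / (1 + q) \<le> 1 - 1 / sqrt 3" by simp
  moreover have "2 * (1 - p) ^ (m + 1) / (2 - p) = 2 * q ^ (m + 1) / (1 + q)"
    by (simp add: q_def)
  ultimately show ?thesis using inv_sqrt3 by linarith
qed

lemma inf_le:
  "(INF p\<in>{0<..<1::real}. 1 - 2 * (1 - p) ^ (nat \<lfloor>sqrt (2 * (1 - p) / p\<^sup>2)\<rfloor> + 1) / (2 - p)) = sqrt 3 / 3"
proof (rule cInf_eq_non_empty)
  show "(\<lambda>p. 1 - 2 * (1 - p) ^ (nat \<lfloor>sqrt (2 * (1 - p) / p\<^sup>2)\<rfloor> + 1) / (2 - p)) ` {0<..<1::real} \<noteq> {}"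
    by auto
next
  fix x assume "x \<in> (\<lambda>p. 1 - 2 * (1 - p) ^ (nat \<lfloor>sqrt (2 * (1 - p) / p\<^sup>2)\<rfloor> + 1) / (2 - p)) ` {0<..<1::real}"
  then obtain p where p: "0 < p" "p < 1" and x: "x = 1 - 2 * (1 - p) ^ (nat \<lfloor>sqrt (2 * (1 - p) / p\<^sup>2)\<rfloor> + 1) / (2 - p)"
    by auto
  show "sqrt 3 / 3 \<le> x" unfolding x
  proof (rule lowb[OF p])
    have "sqrt (2 * (1 - p) / p\<^sup>2) < real_of_int \<lfloor>sqrt (2 * (1 - p) / p\<^sup>2)\<rfloor> + 1" by linarith
    moreover have "real_of_int \<lfloor>sqrt (2 * (1 - p) / p\<^sup>2)\<rfloor> = real (nat \<lfloor>sqrt (2 * (1 - p) / p\<^sup>2)\<rfloor>)"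
      using p by simp
    moreover have "real (nat \<lfloor>sqrt (2 * (1 - p) / p\<^sup>2)\<rfloor> + 1) = real (nat \<lfloor>sqrt (2 * (1 - p) / p\<^sup>2)\<rfloor>) + 1" by simp
    ultimately show "sqrt (2 * (1 - p) / p\<^sup>2) \<le> real (nat \<lfloor>sqrt (2 * (1 - p) / p\<^sup>2)\<rfloor> + 1)" by linarith
  qed
next
  fix y assume y: "\<And>x. x \<in> (\<lambda>p. 1 - 2 * (1 - p) ^ (nat \<lfloor>sqrt (2 * (1 - p) / p\<^sup>2)\<rfloor> + 1) / (2 - p)) ` {0<..<1::real} \<Longrightarrow> y \<le> x"
  show "y \<le> sqrt 3 / 3"
  proof (rule ccontr)
    assume "\<not> y \<le> sqrt 3 / 3"
    then have yc: "y > sqrt 3 / 3" by simp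
    define c where "c = sqrt 3 / (3::real)"
    have c: "c * c = 1 / 3" "c > 0.5" "c < 0.6" using sqrt3_facts unfolding c_def by auto
    define y' where "y' = (c + min y 1) / 2"
    have y': "c < y'" "y' < y" "y' < 1" using yc c unfolding y'_def c_def[symmetric] by auto
    define p where "p = 2 * y' / (1 + y')"
    have p: "0 < p" "p < 1" using y' c by (auto simp: p_def field_simps)
    have q: "1 - p = (1 - y') / (1 + y')" using y' c by (simp add: p_def field_simps)
    have "y' * y' > c * c" using y' c by (intro mult_strict_mono) auto
    then have yy: "y' * y' > 1 / 3" using c by simp
    define d where "d = 1 + y'"
    have d: "d > 0" using y' c by (simp add: d_def)
    have pd: "p * d = 2 * y'" using d by (simp add: p_def d_def)
    have qd: "(1 - p) * d = 1 - y'" using pd by (simp add: d_def algebra_simps)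
    have "(p * p - 2 * (1 - p)) * (d * d) = (p * d) * (p * d) - 2 * ((1 - p) * d) * d"
      by (simp add: algebra_simps)
    also have "\<dots> = 6 * (y' * y') - 2" by (simp only: pd qd) (simp add: d_def algebra_simps)
    also have "\<dots> > 0" using yy by simp
    finally have "0 < (p * p - 2 * (1 - p)) * (d * d)" .
    then have "0 < p * p - 2 * (1 - p)" using d by (simp add: zero_less_mult_iff)
    then have "2 * (1 - p) / p\<^sup>2 < 1" using p by (simp add: power2_eq_square)
    then have "sqrt (2 * (1 - p) / p\<^sup>2) < 1" by simp
    moreover have "sqrt (2 * (1 - p) / p\<^sup>2) \<ge> 0" using p by simp
    ultimately have fl: "nat \<lfloor>sqrt (2 * (1 - p) / p\<^sup>2)\<rfloor> = 0" by (simp add: floor_eq_iff)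
    have pd2: "(2 - p) * d = 2" using qd by (simp add: d_def algebra_simps)
    have e2: "2 * (1 - p) * d = 2 * (1 - y')" by (simp only: mult.assoc qd)
    have "2 * (1 - p) / (2 - p) = (2 * (1 - p) * d) / ((2 - p) * d)"
      using d by simp
    also have "\<dots> = 1 - y'" unfolding pd2 e2 by simp
    finally have "1 - 2 * (1 - p) ^ (nat \<lfloor>sqrt (2 * (1 - p) / p\<^sup>2)\<rfloor> + 1) / (2 - p) = y'"
      unfolding fl by simp
    moreover have "y \<le> 1 - 2 * (1 - p) ^ (nat \<lfloor>sqrt (2 * (1 - p) / p\<^sup>2)\<rfloor> + 1) / (2 - p)"
      using p by (intro y) auto
    ultimately show False using y' by simp
  qed
qed

lemma inf_lt:
  "(INF p\<in>{0<..<1::real}. 1 - 2 * (1 - p) ^ (nat (\<lceil>sqrt (2 * (1 - p) / p\<^sup>2)\<rceil> - 1) + 1) / (2 - p)) = sqrt 3 / 3"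
proof (rule antisym)
  define r where "r = sqrt (3::real)"
  have r: "r * r = 3" "r > 1.7" "r < 1.8" using sqrt3_facts unfolding r_def by auto
  define p0 where "p0 = r - 1"
  have p0: "0 < p0" "p0 < 1" using r by (auto simp: p0_def)
  have "2 * (1 - p0) / p0\<^sup>2 = 1"
  proof -
    have "p0\<^sup>2 = 4 - 2 * r" using r by (simp add: p0_def power2_eq_square algebra_simps)
    moreover have "4 - 2 * r > 0" using r by simp
    moreover have "2 * (1 - p0) = 4 - 2 * r" by (simp add: p0_def)
    ultimately show ?thesis by simp
  qed
  then have ce: "nat (\<lceil>sqrt (2 * (1 - p0) / p0\<^sup>2)\<rceil> - 1) = 0" by simp
  have val: "1 - 2 * (1 - p0) ^ (nat (\<lceil>sqrt (2 * (1 - p0) / p0\<^sup>2)\<rceil> - 1) + 1) / (2 - p0) = sqrt 3 / 3"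
  proof -
    have r3: "3 - r \<noteq> 0" using r by simp
    have "1 - 2 * (1 - p0) / (2 - p0) = 1 - 2 * (2 - r) / (3 - r)"
      by (simp add: p0_def)
    also have "\<dots> = (3 - r) / (3 - r) - 2 * (2 - r) / (3 - r)"
      using r3 by simp
    also have "\<dots> = ((3 - r) - 2 * (2 - r)) / (3 - r)"
      by (rule diff_divide_distrib[symmetric])
    also have "\<dots> = (r - 1) / (3 - r)" by simp
    also have "\<dots> = r / 3"
    proof -
      have e: "(r - 1) * 3 = r * (3 - r)" using r by (simp add: algebra_simps)
      show ?thesis by (rule iffD2[OF frac_eq_eq]) (use r3 e in auto)
    qed
    finally show ?thesis unfolding ce r_def by simp
  qed
  show "(INF p\<in>{0<..<1::real}. 1 - 2 * (1 - p) ^ (nat (\<lceil>sqrt (2 * (1 - p) / p\<^sup>2)\<rceil> - 1) + 1) / (2 - p)) \<le> sqrt 3 / 3"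
  proof -
    have "(INF p\<in>{0<..<1::real}. 1 - 2 * (1 - p) ^ (nat (\<lceil>sqrt (2 * (1 - p) / p\<^sup>2)\<rceil> - 1) + 1) / (2 - p))
       \<le> 1 - 2 * (1 - p0) ^ (nat (\<lceil>sqrt (2 * (1 - p0) / p0\<^sup>2)\<rceil> - 1) + 1) / (2 - p0)"
    proof (rule cINF_lower)
      show "bdd_below ((\<lambda>p. 1 - 2 * (1 - p) ^ (nat (\<lceil>sqrt (2 * (1 - p) / p\<^sup>2)\<rceil> - 1) + 1) / (2 - p)) ` {0<..<1::real})"
      proof (rule bdd_belowI2)
        fix p :: real assume "p \<in> {0<..<1}"
        then have p: "0 < p" "p < 1" by auto
        show "sqrt 3 / 3 \<le> 1 - 2 * (1 - p) ^ (nat (\<lceil>sqrt (2 * (1 - p) / p\<^sup>2)\<rceil> - 1) + 1) / (2 - p)"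
        proof (rule lowb[OF p])
          have "sqrt (2 * (1 - p) / p\<^sup>2) > 0" using p by simp
          then show "sqrt (2 * (1 - p) / p\<^sup>2) \<le> real (nat (\<lceil>sqrt (2 * (1 - p) / p\<^sup>2)\<rceil> - 1) + 1)"
            by linarith
        qed
      qed
      show "p0 \<in> {0<..<1}" using p0 by auto
    qed
    then show ?thesis using val by simp
  qed
  show "sqrt 3 / 3 \<le> (INF p\<in>{0<..<1::real}. 1 - 2 * (1 - p) ^ (nat (\<lceil>sqrt (2 * (1 - p) / p\<^sup>2)\<rceil> - 1) + 1) / (2 - p))"
  proof (rule cINF_greatest)
    show "{0<..<1::real} \<noteq> {}" by auto
    fix p :: real assume "p \<in> {0<..<1}"
    then have p: "0 < p" "p < 1" by auto
    show "sqrt 3 / 3 \<le> 1 - 2 * (1 - p) ^ (nat (\<lceil>sqrt (2 * (1 - p) / p\<^sup>2)\<rceil> - 1) + 1) / (2 - p)"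
    proof (rule lowb[OF p])
      have "sqrt (2 * (1 - p) / p\<^sup>2) > 0" using p by simp
      then show "sqrt (2 * (1 - p) / p\<^sup>2) \<le> real (nat (\<lceil>sqrt (2 * (1 - p) / p\<^sup>2)\<rceil> - 1) + 1)"
        by linarith
    qed
  qed
qed

theorem proposition3p2:
  shows "(INF p\<in>{0<..<1::real}.
            measure_pmf.prob (sym_geom_pmf p)
              {k. \<bar>real_of_int k - measure_pmf.expectation (sym_geom_pmf p) real_of_int\<bar>
                  \<le> sqrt (measure_pmf.variance (sym_geom_pmf p) real_of_int)}) = sqrt 3 / 3
       \<and> (INF p\<in>{0<..<1::real}.
            measure_pmf.prob (sym_geom_pmf p)
              {k. \<bar>real_of_int k - measure_pmf.expectation (sym_geom_pmf p) real_of_int\<bar>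
                  < sqrt (measure_pmf.variance (sym_geom_pmf p) real_of_int)}) = sqrt 3 / 3"
proof
  have "(INF p\<in>{0<..<1::real}.
            measure_pmf.prob (sym_geom_pmf p)
              {k. \<bar>real_of_int k - measure_pmf.expectation (sym_geom_pmf p) real_of_int\<bar>
                  \<le> sqrt (measure_pmf.variance (sym_geom_pmf p) real_of_int)}) =
        (INF p\<in>{0<..<1::real}. 1 - 2 * (1 - p) ^ (nat \<lfloor>sqrt (2 * (1 - p) / p\<^sup>2)\<rfloor> + 1) / (2 - p))"
    by (intro INF_cong refl) (auto simp: val_le)
  then show "(INF p\<in>{0<..<1::real}.
            measure_pmf.prob (sym_geom_pmf p)
              {k. \<bar>real_of_int k - measure_pmf.expectation (sym_geom_pmf p) real_of_int\<bar>
                  \<le> sqrt (measure_pmf.variance (sym_geom_pmf p) real_of_int)}) = sqrt 3 / 3"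
    using inf_le by simp
  have "(INF p\<in>{0<..<1::real}.
            measure_pmf.prob (sym_geom_pmf p)
              {k. \<bar>real_of_int k - measure_pmf.expectation (sym_geom_pmf p) real_of_int\<bar>
                  < sqrt (measure_pmf.variance (sym_geom_pmf p) real_of_int)}) =
        (INF p\<in>{0<..<1::real}. 1 - 2 * (1 - p) ^ (nat (\<lceil>sqrt (2 * (1 - p) / p\<^sup>2)\<rceil> - 1) + 1) / (2 - p))"
    by (intro INF_cong refl) (auto simp: val_lt)
  then show "(INF p\<in>{0<..<1::real}.
            measure_pmf.prob (sym_geom_pmf p)
              {k. \<bar>real_of_int k - measure_pmf.expectation (sym_geom_pmf p) real_of_int\<bar>
                  < sqrt (measure_pmf.variance (sym_geom_pmf p) real_of_int)}) = sqrt 3 / 3"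
    using inf_lt by simp
qed

end
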